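(* Let $H$ be a real Hilbert space and let $A_1,A_2,\dots,A_k$ be non-empty, convex and closed subsets of $H$. Then for every $r>0$ the set $$F_r=\{\alpha\in[0,1]:P_{A_k}^\alpha P_{A_{k-1}}^\alpha\cdots P_{A_1}^\alpha\text{ has a fixed point }x\text{ with }\|x\|\leq r\}$$ is closed in $[0,1]$.
   Context: For a non-empty, convex, closed subset $A$ of a real Hilbert space $H$, $P_A:H\to A$ denotes the metric (nearest-point) projection onto $A$. For $\alpha\in[0,1]$, the $\alpha$-relaxed projection onto $A$ is the map $P_A^\alpha:H\to H$, $P_A^\alpha(x)=\alpha P_A(x)+(1-\alpha)x$. Compositions are written as products. *)

theory Defs
  imports "HOL-Analysis.Analysis"
begin

text \<open>For non-empty closed convex sets the
  nearest point exists and is unique, so this choice is the projection.\<close>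
definition metric_proj :: "'a::{real_inner,complete_space} set \<Rightarrow> 'a \<Rightarrow> 'a" where
  "metric_proj A x = (SOME p. p \<in> A \<and> (\<forall>y\<in>A. dist x p \<le> dist x y))"

definition relaxed_proj :: "'a::{real_inner,complete_space} set \<Rightarrow> real \<Rightarrow> 'a \<Rightarrow> 'a" where
  "relaxed_proj A \<alpha> x = \<alpha> *\<^sub>R metric_proj A x + (1 - \<alpha>) *\<^sub>R x"

fun relaxed_comp :: "(nat \<Rightarrow> 'a::{real_inner,complete_space} set) \<Rightarrow> nat \<Rightarrow> real \<Rightarrow> 'a \<Rightarrow> 'a" where
  "relaxed_comp A 0 \<alpha> = id"
| "relaxed_comp A (Suc n) \<alpha> = relaxed_proj (A (Suc n)) \<alpha> \<circ> relaxed_comp A n \<alpha>"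

end

theory Submission
  imports Defs
begin


definition LS :: "(nat \<Rightarrow> real) \<Rightarrow> real" where
  "LS a = real_of_ereal (limsup (\<lambda>n. ereal (a n)))"

definition bseq :: "(nat \<Rightarrow> real) \<Rightarrow> bool" where
  "bseq a \<longleftrightarrow> (\<exists>B. \<forall>n. \<bar>a n\<bar> \<le> B)"

lemma LS_fin:
  assumes "bseq a"
  shows "limsup (\<lambda>n. ereal (a n)) = ereal (LS a)"
proof -
  obtain B where B: "\<And>n. \<bar>a n\<bar> \<le> B" using assms unfolding bseq_def by auto
  have B2: "\<And>n. -B \<le> a n" using B by (metis abs_le_iff minus_le_iff)
  have "limsup (\<lambda>n. ereal (a n)) \<le> ereal B"
    by (rule Limsup_bounded) (use B abs_le_D1 in \<open>auto intro!: always_eventually\<close>)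
  moreover have "ereal (-B) \<le> limsup (\<lambda>n. ereal (a n))"
  proof (rule le_Limsup)
    show "\<forall>\<^sub>F n in sequentially. ereal (- B) \<le> ereal (a n)"
      by (rule always_eventually) (use B2 in simp)
  qed simp
  ultimately have "\<bar>limsup (\<lambda>n. ereal (a n))\<bar> \<noteq> \<infinity>" by auto
  then show ?thesis unfolding LS_def by (simp add: ereal_real')
qed

lemma LS_mono:
  assumes "bseq a" "bseq b" "\<And>n. a n \<le> b n"
  shows "LS a \<le> LS b"
proof -
  have "limsup (\<lambda>n. ereal (a n)) \<le> limsup (\<lambda>n. ereal (b n))"
    by (rule Limsup_mono) (use assms in auto)
  then show ?thesis using LS_fin[OF assms(1)] LS_fin[OF assms(2)] by simp
qed

lemma LS_add:
  assumes "bseq a" "bseq b"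
  shows "LS (\<lambda>n. a n + b n) \<le> LS a + LS b"
proof -
  have ab: "bseq (\<lambda>n. a n + b n)" using assms unfolding bseq_def
    by (metis abs_triangle_ineq add_mono order_trans)
  have "limsup (\<lambda>n. ereal (a n) + ereal (b n)) \<le> limsup (\<lambda>n. ereal (a n)) + limsup (\<lambda>n. ereal (b n))"
    by (rule ereal_limsup_add_mono)
  then show ?thesis using LS_fin[OF assms(1)] LS_fin[OF assms(2)] LS_fin[OF ab] by simp
qed

lemma LS_tendsto:
  assumes "a \<longlonglongrightarrow> l"
  shows "LS a = l"
proof -
  have "(\<lambda>n. ereal (a n)) \<longlonglongrightarrow> ereal l" using assms by (simp add: tendsto_ereal)
  then have "limsup (\<lambda>n. ereal (a n)) = ereal l" by (rule lim_imp_Limsup[OF trivial_limit_sequentially])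
  then show ?thesis unfolding LS_def by simp
qed

lemma LS_cmult:
  assumes "bseq a" "c > 0"
  shows "LS (\<lambda>n. c * a n) = c * LS a"
proof -
  have "limsup (\<lambda>n. ereal c * ereal (a n)) = ereal c * limsup (\<lambda>n. ereal (a n))"
    by (rule ereal_limsup_lim_mult) (use assms in auto)
  then show ?thesis unfolding LS_def using LS_fin[OF assms(1)] by simp
qed

lemma bseqI: "(\<And>n. \<bar>a n\<bar> \<le> B) \<Longrightarrow> bseq a" unfolding bseq_def by auto

lemma mid_ident:
  fixes x y z :: "'a::real_inner"
  shows "(norm (x - ((1/2) *\<^sub>R y + (1/2) *\<^sub>R z)))\<^sup>2
     = (norm (x - y))\<^sup>2 / 2 + (norm (x - z))\<^sup>2 / 2 - (norm (y - z))\<^sup>2 / 4"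
proof -
  have "y \<bullet> z = z \<bullet> y" "x \<bullet> y = y \<bullet> x" "x \<bullet> z = z \<bullet> x" by (simp_all add: inner_commute)
  then show ?thesis
    by (simp add: power2_norm_eq_inner inner_diff_left inner_diff_right inner_add_left inner_add_right field_simps)
qed

lemma min_exists:
  fixes \<phi> :: "'a::{real_inner,complete_space} \<Rightarrow> real"
  assumes cl: "closed C" and cv: "convex C" and ne: "C \<noteq> {}" and ct: "continuous_on C \<phi>"
    and pos: "\<And>y. y \<in> C \<Longrightarrow> \<phi> y \<ge> 0"
    and mid: "\<And>y z. y \<in> C \<Longrightarrow> z \<in> C \<Longrightarrow>
        \<phi> ((1/2) *\<^sub>R y + (1/2) *\<^sub>R z) \<le> (\<phi> y + \<phi> z)/2 - (norm (y - z))\<^sup>2/4"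
  shows "\<exists>c\<in>C. \<forall>y\<in>C. \<phi> c \<le> \<phi> y"
proof -
  define d where "d = Inf (\<phi> ` C)"
  have bdd: "bdd_below (\<phi> ` C)" using pos by (auto intro: bdd_belowI[of _ 0])
  have dle: "\<And>y. y \<in> C \<Longrightarrow> d \<le> \<phi> y" unfolding d_def using bdd by (auto intro: cInf_lower)
  have "\<forall>n. \<exists>y\<in>C. \<phi> y < d + 1/(real n + 1)"
  proof
    fix n :: nat
    have "Inf (\<phi> ` C) < d + 1/(real n + 1)" unfolding d_def by simp
    then obtain t where "t \<in> \<phi> ` C" "t < d + 1/(real n + 1)"
      using cInf_lessD[of "\<phi> ` C"] ne by blast
    then show "\<exists>y\<in>C. \<phi> y < d + 1/(real n + 1)" by auto
  qed
  then obtain Y where YC: "\<And>n. Y n \<in> C" and Yd: "\<And>n. \<phi> (Y n) < d + 1/(real n + 1)"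
    by metis
  have key: "(norm (Y m - Y n))\<^sup>2 \<le> 2/(real m + 1) + 2/(real n + 1)" for m n
  proof -
    have "(1/2) *\<^sub>R Y m + (1/2) *\<^sub>R Y n \<in> C"
      using convexD[OF cv YC YC, of "1/2" "1/2"] by simp
    then have "d \<le> \<phi> ((1/2) *\<^sub>R Y m + (1/2) *\<^sub>R Y n)" by (rule dle)
    also have "\<dots> \<le> (\<phi> (Y m) + \<phi> (Y n))/2 - (norm (Y m - Y n))\<^sup>2/4" by (rule mid[OF YC YC])
    moreover have "2/(real m + 1) = 2 * (1/(real m + 1))" "2/(real n + 1) = 2 * (1/(real n + 1))" by simp_all
    ultimately show ?thesis using Yd[of m] Yd[of n] by argo
  qed
  have "Cauchy Y"
  proof (rule metric_CauchyI)
    fix e :: real assume e: "e > 0"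
    obtain M :: nat where M: "4 / e\<^sup>2 < real M" using reals_Archimedean2 by blast
    show "\<exists>M. \<forall>m\<ge>M. \<forall>n\<ge>M. dist (Y m) (Y n) < e"
    proof (intro exI allI impI)
      fix m n assume mn: "M \<le> m" "M \<le> n"
      have e2: "e\<^sup>2 > 0" using e by simp
      have "2/(real m + 1) \<le> 2/(real M + 1)" using mn by (simp add: frac_le)
      moreover have "2/(real n + 1) \<le> 2/(real M + 1)" using mn by (simp add: frac_le)
      moreover have "4/(real M + 1) < e\<^sup>2"
      proof -
        have "4 < e\<^sup>2 * real M" using M e2 by (simp add: field_simps)
        then have "4 < e\<^sup>2 * (real M + 1)" using e2 by (simp add: distrib_left add_pos_pos less_add_same_cancel1 order_less_trans)
        then show ?thesis by (simp add: field_simps)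
      qed
      ultimately have "(dist (Y m) (Y n))\<^sup>2 < e\<^sup>2" using key[of m n] by (simp add: dist_norm)
      then show "dist (Y m) (Y n) < e" using e by (simp add: power_less_imp_less_base)
    qed
  qed
  then obtain c where Yc: "Y \<longlonglongrightarrow> c" using convergent_eq_Cauchy by blast
  have cC: "c \<in> C" using closed_sequentially[OF cl] YC Yc by blast
  have "(\<lambda>n. \<phi> (Y n)) \<longlonglongrightarrow> \<phi> c"
    using continuous_on_tendsto_compose[OF ct Yc cC] YC by auto
  moreover have "(\<lambda>n. \<phi> (Y n)) \<longlonglongrightarrow> d"
  proof (rule tendsto_sandwich[of "\<lambda>n. d" _ _ "\<lambda>n. d + 1/(real n + 1)"])
    show "\<forall>\<^sub>F n in sequentially. d \<le> \<phi> (Y n)" using dle YC by (auto intro!: always_eventually)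
    show "\<forall>\<^sub>F n in sequentially. \<phi> (Y n) \<le> d + 1/(real n + 1)" using Yd less_imp_le by (auto intro!: always_eventually)
    show "(\<lambda>n. d + 1 / (real n + 1)) \<longlonglongrightarrow> d"
      using tendsto_add[OF tendsto_const LIMSEQ_inverse_real_of_nat] by (simp add: inverse_eq_divide add.commute)
  qed simp
  ultimately have "\<phi> c = d" using LIMSEQ_unique by blast
  then show ?thesis using cC dle by auto
qed

lemma proj_exists:
  fixes A :: "'a::{real_inner,complete_space} set"
  assumes "closed A" "convex A" "A \<noteq> {}"
  shows "\<exists>p. p \<in> A \<and> (\<forall>y\<in>A. dist x p \<le> dist x y)"
proof -
  have "\<exists>c\<in>A. \<forall>y\<in>A. (norm (x - c))\<^sup>2 \<le> (norm (x - y))\<^sup>2"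
  proof (rule min_exists[OF assms])
    show "continuous_on A (\<lambda>y. (norm (x - y))\<^sup>2)" by (intro continuous_intros)
  qed (auto simp: mid_ident)
  then show ?thesis by (auto simp: dist_norm)
qed

lemma proj_props:
  fixes A :: "'a::{real_inner,complete_space} set"
  assumes "closed A" "convex A" "A \<noteq> {}"
  shows "metric_proj A x \<in> A" "\<forall>y\<in>A. dist x (metric_proj A x) \<le> dist x y"
  using someI_ex[OF proj_exists[OF assms, of x]] unfolding metric_proj_def by auto

lemma proj_lip:
  fixes A :: "'a::{real_inner,complete_space} set"
  assumes "closed A" "convex A" "A \<noteq> {}"
  shows "norm (metric_proj A x - metric_proj A y) \<le> norm (x - y)"
proof -
  note px = proj_props[OF assms, of x] and py = proj_props[OF assms, of y]
  have "inner (x - metric_proj A x) (metric_proj A y - metric_proj A x) \<le> 0"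
    by (rule any_closest_point_dot[OF assms(2,1)]) (use px py in auto)
  moreover have "inner (y - metric_proj A y) (metric_proj A x - metric_proj A y) \<le> 0"
    by (rule any_closest_point_dot[OF assms(2,1)]) (use px py in auto)
  ultimately show ?thesis unfolding norm_le
    using inner_ge_zero[of "(x - metric_proj A x) - (y - metric_proj A y)"]
    by (simp add: inner_add inner_diff inner_commute)
qed

lemma rp_lip:
  fixes A :: "'a::{real_inner,complete_space} set"
  assumes "closed A" "convex A" "A \<noteq> {}" "0 \<le> \<alpha>" "\<alpha> \<le> 1"
  shows "norm (relaxed_proj A \<alpha> x - relaxed_proj A \<alpha> y) \<le> norm (x - y)"
proof -
  have "relaxed_proj A \<alpha> x - relaxed_proj A \<alpha> y
      = \<alpha> *\<^sub>R (metric_proj A x - metric_proj A y) + (1 - \<alpha>) *\<^sub>R (x - y)"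
    unfolding relaxed_proj_def by (simp add: algebra_simps)
  then have "norm (relaxed_proj A \<alpha> x - relaxed_proj A \<alpha> y)
      \<le> \<alpha> * norm (metric_proj A x - metric_proj A y) + (1 - \<alpha>) * norm (x - y)"
    using norm_triangle_ineq[of "\<alpha> *\<^sub>R (metric_proj A x - metric_proj A y)" "(1 - \<alpha>) *\<^sub>R (x - y)"]
      assms by simp
  also have "\<dots> \<le> \<alpha> * norm (x - y) + (1 - \<alpha>) * norm (x - y)"
    using proj_lip[OF assms(1-3)] assms(4) by (simp add: mult_left_mono)
  finally show ?thesis by (simp add: algebra_simps)
qed

lemma rc_lip:
  fixes A :: "nat \<Rightarrow> 'a::{real_inner,complete_space} set"
  assumes "\<And>i. i \<in> {1..n} \<Longrightarrow> closed (A i) \<and> convex (A i) \<and> A i \<noteq> {}" "0 \<le> \<alpha>" "\<alpha> \<le> 1"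
  shows "norm (relaxed_comp A n \<alpha> x - relaxed_comp A n \<alpha> y) \<le> norm (x - y)"
  using assms(1)
proof (induction n)
  case 0 then show ?case by simp
next
  case (Suc n)
  have "norm (relaxed_comp A (Suc n) \<alpha> x - relaxed_comp A (Suc n) \<alpha> y)
     \<le> norm (relaxed_comp A n \<alpha> x - relaxed_comp A n \<alpha> y)"
    using rp_lip[of "A (Suc n)" \<alpha>] Suc.prems[of "Suc n"] assms(2,3) by simp
  also have "\<dots> \<le> norm (x - y)" using Suc by simp
  finally show ?case .
qed

lemma tendsto_bseq: "a \<longlonglongrightarrow> l \<Longrightarrow> bseq a"
  using convergent_imp_Bseq[of a] unfolding convergent_def Bseq_def bseq_def by auto

lemma bseq_add: "bseq a \<Longrightarrow> bseq b \<Longrightarrow> bseq (\<lambda>n. a n + b n)"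
  unfolding bseq_def by (metis abs_triangle_ineq add_mono order_trans)

lemma bseq_cmult: "bseq a \<Longrightarrow> bseq (\<lambda>n. c * a n)"
  unfolding bseq_def by (metis abs_mult abs_ge_zero mult_left_mono)

lemma bseq_const: "bseq (\<lambda>n. c)"
  unfolding bseq_def by auto

lemma LS_const: "LS (\<lambda>n. c) = c"
  by (rule LS_tendsto) simp

lemma LS_add_const: "bseq a \<Longrightarrow> LS (\<lambda>n. a n + c) \<le> LS a + c"
  using LS_add[of a "\<lambda>n. c"] bseq_const LS_const by auto

lemma AC:
  fixes T :: "'a::{real_inner,complete_space} \<Rightarrow> 'a" and x :: "nat \<Rightarrow> 'a"
  assumes ne: "\<And>u v. norm (T u - T v) \<le> norm (u - v)" and xr: "\<And>n. norm (x n) \<le> r"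
    and r: "r \<ge> 0" and e: "(\<lambda>n. norm (T (x n) - x n)) \<longlonglongrightarrow> 0"
  shows "\<exists>c. T c = c \<and> norm c \<le> r"
proof -
  define \<phi> where "\<phi> y = LS (\<lambda>n. (norm (x n - y))\<^sup>2)" for y
  have bs: "bseq (\<lambda>n. (norm (x n - y))\<^sup>2)" for y
  proof (rule bseqI)
    fix n
    have "norm (x n - y) \<le> r + norm y" using norm_triangle_ineq4[of "x n" y] xr[of n] by linarith
    then have "(norm (x n - y))\<^sup>2 \<le> (r + norm y)\<^sup>2" by (rule power_mono) simp
    then show "\<bar>(norm (x n - y))\<^sup>2\<bar> \<le> (r + norm y)\<^sup>2" by simp
  qed
  have pos: "\<phi> y \<ge> 0" for y
    using LS_mono[OF bseq_const bs, of 0 y] LS_const unfolding \<phi>_def by simp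
  have mid: "\<phi> ((1/2) *\<^sub>R y + (1/2) *\<^sub>R z) \<le> (\<phi> y + \<phi> z)/2 - (norm (y - z))\<^sup>2/4" for y z
  proof -
    have eq: "(\<lambda>n. (norm (x n - ((1/2) *\<^sub>R y + (1/2) *\<^sub>R z)))\<^sup>2)
      = (\<lambda>n. (1/2) * (norm (x n - y))\<^sup>2 + ((1/2) * (norm (x n - z))\<^sup>2 + (- (norm (y - z))\<^sup>2/4)))"
      by (simp add: mid_ident algebra_simps)
    have "\<phi> ((1/2) *\<^sub>R y + (1/2) *\<^sub>R z)
       \<le> LS (\<lambda>n. (1/2) * (norm (x n - y))\<^sup>2) + LS (\<lambda>n. (1/2) * (norm (x n - z))\<^sup>2 + (- (norm (y - z))\<^sup>2/4))"
      unfolding \<phi>_def eq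
      by (rule LS_add) (intro bseq_cmult bseq_add bs bseq_const)+
    also have "\<dots> \<le> LS (\<lambda>n. (1/2) * (norm (x n - y))\<^sup>2) + (LS (\<lambda>n. (1/2) * (norm (x n - z))\<^sup>2) + (- (norm (y - z))\<^sup>2/4))"
      by (rule add_left_mono, rule LS_add_const[OF bseq_cmult[OF bs]])
    also have "\<dots> = (\<phi> y + \<phi> z)/2 - (norm (y - z))\<^sup>2/4"
      unfolding \<phi>_def using LS_cmult[OF bs, of "1/2"] by simp
    finally show ?thesis .
  qed
  have est: "\<phi> y \<le> \<phi> z + dist y z * (2 * (r + norm z) + dist y z)" for y z
  proof -
    have pw: "(norm (x n - y))\<^sup>2 \<le> (norm (x n - z))\<^sup>2 + dist y z * (2 * (r + norm z) + dist y z)" for n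
    proof -
      have a: "norm (x n - y) \<le> norm (x n - z) + dist y z"
        using norm_triangle_ineq[of "x n - z" "z - y"] by (simp add: dist_norm norm_minus_commute)
      have b: "norm (x n - z) \<le> r + norm z" using norm_triangle_ineq4[of "x n" z] xr[of n] by linarith
      have "(norm (x n - y))\<^sup>2 \<le> (norm (x n - z) + dist y z)\<^sup>2" using a by (rule power_mono) simp
      also have "\<dots> = (norm (x n - z))\<^sup>2 + dist y z * (2 * norm (x n - z) + dist y z)"
        by (simp add: power2_eq_square algebra_simps)
      also have "\<dots> \<le> (norm (x n - z))\<^sup>2 + dist y z * (2 * (r + norm z) + dist y z)"
        using b by (simp add: mult_left_mono)
      finally show ?thesis .
    qed
    have "\<phi> y \<le> LS (\<lambda>n. (norm (x n - z))\<^sup>2 + dist y z * (2 * (r + norm z) + dist y z))"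
      unfolding \<phi>_def by (rule LS_mono[OF bs bseq_add[OF bs bseq_const] pw])
    also have "\<dots> \<le> \<phi> z + dist y z * (2 * (r + norm z) + dist y z)"
      unfolding \<phi>_def by (rule LS_add_const[OF bs])
    finally show ?thesis .
  qed
  have cont: "continuous_on UNIV \<phi>"
  proof -
    have "(\<phi> \<longlongrightarrow> \<phi> z) (at z)" for z
    proof -
      define K where "K = 2 * (r + norm z)"
      have "((\<lambda>y. \<phi> y - \<phi> z) \<longlongrightarrow> 0) (at z)"
      proof (rule Lim_null_comparison)
        show "\<forall>\<^sub>F y in at z. norm (\<phi> y - \<phi> z) \<le> dist y z * (K + 3 * dist y z)"
        proof (rule always_eventually, rule allI)
          fix y
          have "norm y \<le> norm z + dist y z" using norm_triangle_ineq[of "y - z" z] by (simp add: dist_norm)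
          then have "dist z y * (2 * (r + norm y) + dist z y) \<le> dist y z * (K + 3 * dist y z)"
            unfolding K_def by (simp add: dist_commute mult_left_mono)
          then show "norm (\<phi> y - \<phi> z) \<le> dist y z * (K + 3 * dist y z)"
            using est[of y z] est[of z y] unfolding K_def
            by (simp add: abs_le_iff) (smt (verit) zero_le_dist mult_left_mono)
        qed
        have "((\<lambda>y. dist y z) \<longlongrightarrow> dist z z) (at z)" by (intro tendsto_intros)
        then have "((\<lambda>y. dist y z * (K + 3 * dist y z)) \<longlongrightarrow> dist z z * (K + 3 * dist z z)) (at z)"
          by (intro tendsto_intros)
        then show "((\<lambda>y. dist y z * (K + 3 * dist y z)) \<longlongrightarrow> 0) (at z)" by simp
      qed
      then show ?thesis by (simp add: LIM_zero_iff)
    qed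
    then show ?thesis by (simp add: continuous_on_def)
  qed
  obtain c where cmin: "\<And>y. \<phi> c \<le> \<phi> y"
    using min_exists[of UNIV \<phi>] cont pos mid by auto
  have Tstep: "\<phi> (T y) \<le> \<phi> y" for y
  proof -
    define en where "en n = norm (T (x n) - x n)" for n
    define b where "b n = en n * (2 * (r + norm y) + en n)" for n
    have b0: "b \<longlonglongrightarrow> 0"
    proof -
      have "b \<longlonglongrightarrow> 0 * (2 * (r + norm y) + 0)"
        unfolding b_def en_def by (intro tendsto_intros e)
      then show ?thesis by simp
    qed
    have pw: "(norm (x n - T y))\<^sup>2 \<le> (norm (x n - y))\<^sup>2 + b n" for n
    proof -
      have a: "norm (x n - T y) \<le> en n + norm (x n - y)"
        using norm_triangle_ineq[of "x n - T (x n)" "T (x n) - T y"] ne[of "x n" y]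
        unfolding en_def by (simp add: norm_minus_commute)
      have c: "norm (x n - y) \<le> r + norm y" using norm_triangle_ineq4[of "x n" y] xr[of n] by linarith
      have "(norm (x n - T y))\<^sup>2 \<le> (en n + norm (x n - y))\<^sup>2" using a by (rule power_mono) (simp add: en_def)
      also have "\<dots> = (norm (x n - y))\<^sup>2 + en n * (2 * norm (x n - y) + en n)"
        by (simp add: power2_eq_square algebra_simps)
      also have "\<dots> \<le> (norm (x n - y))\<^sup>2 + b n"
        unfolding b_def using c by (simp add: mult_left_mono en_def)
      finally show ?thesis .
    qed
    have "\<phi> (T y) \<le> LS (\<lambda>n. (norm (x n - y))\<^sup>2 + b n)"
      unfolding \<phi>_def by (rule LS_mono[OF bs bseq_add[OF bs tendsto_bseq[OF b0]] pw])
    also have "\<dots> \<le> \<phi> y + LS b" unfolding \<phi>_def by (rule LS_add[OF bs tendsto_bseq[OF b0]])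
    also have "LS b = 0" by (rule LS_tendsto[OF b0])
    finally show ?thesis by simp
  qed
  have fixc: "T c = c"
  proof -
    have "\<phi> c \<le> \<phi> ((1/2) *\<^sub>R c + (1/2) *\<^sub>R T c)" by (rule cmin)
    also have "\<dots> \<le> (\<phi> c + \<phi> (T c))/2 - (norm (c - T c))\<^sup>2/4" by (rule mid)
    finally have "(norm (c - T c))\<^sup>2 \<le> 0" using Tstep[of c] by argo
    then show ?thesis by simp
  qed
  have nc: "norm c \<le> r"
  proof (rule ccontr)
    assume "\<not> norm c \<le> r"
    then have Nr: "norm c > r" by simp
    then have N0: "norm c > 0" using r by linarith
    define t where "t = r / norm c"
    have tN: "t * norm c = r" unfolding t_def using N0 by simp
    have t1: "1 - t \<ge> 0" unfolding t_def using Nr N0 by (simp add: field_simps)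
    define \<delta> where "\<delta> = (norm c - r)\<^sup>2"
    have d0: "\<delta> > 0" unfolding \<delta>_def using Nr by simp
    have pw: "(norm (x n - t *\<^sub>R c))\<^sup>2 \<le> (norm (x n - c))\<^sup>2 + (- \<delta>)" for n
    proof -
      have ip: "inner (x n) c \<le> r * norm c"
        using norm_cauchy_schwarz[of "x n" c] xr[of n] N0 by (smt (verit) mult_right_mono)
      have cx: "inner c (x n) = inner (x n) c" by (simp add: inner_commute)
      have e1: "(norm (x n - t *\<^sub>R c))\<^sup>2 = (norm (x n))\<^sup>2 - 2 * t * inner (x n) c + t\<^sup>2 * (norm c)\<^sup>2"
        unfolding power2_norm_eq_inner using cx
        by (simp add: inner_diff_left inner_diff_right algebra_simps power2_eq_square)
      have e2: "(norm (x n - c))\<^sup>2 = (norm (x n))\<^sup>2 - 2 * inner (x n) c + (norm c)\<^sup>2"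
        by (simp add: power2_norm_eq_inner inner_diff_left inner_diff_right inner_commute algebra_simps)
      have m: "(1 - t) * (r * norm c - inner (x n) c) \<ge> 0" using t1 ip by simp
      have "t\<^sup>2 * (norm c)\<^sup>2 = r\<^sup>2" using tN by (metis power_mult_distrib)
      then show ?thesis unfolding e1 e2 \<delta>_def using m tN
        by (simp add: algebra_simps power2_eq_square)
    qed
    have "\<phi> (t *\<^sub>R c) \<le> LS (\<lambda>n. (norm (x n - c))\<^sup>2 + (- \<delta>))"
      unfolding \<phi>_def by (rule LS_mono[OF bs bseq_add[OF bs bseq_const] pw])
    also have "\<dots> \<le> \<phi> c + (- \<delta>)" unfolding \<phi>_def by (rule LS_add_const[OF bs])
    finally show False using cmin[of "t *\<^sub>R c"] d0 by simp
  qed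
  show ?thesis using fixc nc by blast
qed

lemma rp_facts:
  fixes A :: "'a::{real_inner,complete_space} set"
  assumes "closed A" "convex A" "A \<noteq> {}" "a0 \<in> A"
  shows "norm (metric_proj A u - u) \<le> norm u + norm a0"
    and "relaxed_proj A \<beta> u - relaxed_proj A \<alpha> u = (\<beta> - \<alpha>) *\<^sub>R (metric_proj A u - u)"
    and "0 \<le> \<beta> \<Longrightarrow> \<beta> \<le> 1 \<Longrightarrow> norm (relaxed_proj A \<beta> u) \<le> norm a0 + 2 * norm u"
proof -
  have "dist u (metric_proj A u) \<le> dist u a0" using proj_props(2)[OF assms(1-3)] assms(4) by auto
  then show n1: "norm (metric_proj A u - u) \<le> norm u + norm a0"
    using norm_triangle_ineq4[of u a0] by (simp add: dist_norm norm_minus_commute)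
  show "relaxed_proj A \<beta> u - relaxed_proj A \<alpha> u = (\<beta> - \<alpha>) *\<^sub>R (metric_proj A u - u)"
    unfolding relaxed_proj_def by (simp add: algebra_simps)
  assume b: "0 \<le> \<beta>" "\<beta> \<le> 1"
  have np: "norm (metric_proj A u) \<le> norm a0 + 2 * norm u"
    using n1 norm_triangle_ineq[of "metric_proj A u - u" u] by simp
  have "norm (relaxed_proj A \<beta> u) \<le> \<beta> * norm (metric_proj A u) + (1 - \<beta>) * norm u"
    unfolding relaxed_proj_def
    using norm_triangle_ineq[of "\<beta> *\<^sub>R metric_proj A u" "(1 - \<beta>) *\<^sub>R u"] b by simp
  also have "\<dots> \<le> \<beta> * (norm a0 + 2 * norm u) + (1 - \<beta>) * (norm a0 + 2 * norm u)"
    using b np by (intro add_mono mult_left_mono) auto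
  finally show "norm (relaxed_proj A \<beta> u) \<le> norm a0 + 2 * norm u" by (simp add: algebra_simps)
qed

lemma rc_bound:
  fixes A :: "nat \<Rightarrow> 'a::{real_inner,complete_space} set"
  assumes "\<And>i. i \<in> {1..n} \<Longrightarrow> closed (A i) \<and> convex (A i) \<and> A i \<noteq> {}"
  shows "\<exists>M C. \<forall>\<alpha> \<beta> x. \<alpha> \<in> {0..1} \<longrightarrow> \<beta> \<in> {0..1} \<longrightarrow> norm x \<le> r \<longrightarrow>
     norm (relaxed_comp A n \<beta> x) \<le> M \<and>
     norm (relaxed_comp A n \<beta> x - relaxed_comp A n \<alpha> x) \<le> C * \<bar>\<beta> - \<alpha>\<bar>"
  using assms
proof (induction n)
  case 0
  show ?case by (rule exI[of _ r], rule exI[of _ 0]) simp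
next
  case (Suc n)
  have pre: "\<And>i. i \<in> {1..n} \<Longrightarrow> closed (A i) \<and> convex (A i) \<and> A i \<noteq> {}"
    using Suc.prems by simp
  obtain M C where MC: "\<forall>\<alpha> \<beta> x. \<alpha> \<in> {0..1} \<longrightarrow> \<beta> \<in> {0..1} \<longrightarrow> norm x \<le> r \<longrightarrow>
     norm (relaxed_comp A n \<beta> x) \<le> M \<and>
     norm (relaxed_comp A n \<beta> x - relaxed_comp A n \<alpha> x) \<le> C * \<bar>\<beta> - \<alpha>\<bar>"
    using Suc.IH[OF pre] by blast
  have As: "closed (A (Suc n))" "convex (A (Suc n))" "A (Suc n) \<noteq> {}" using Suc.prems[of "Suc n"] by auto
  then obtain a0 where a0: "a0 \<in> A (Suc n)" by auto
  note F = rp_facts[OF As a0]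
  show ?case
  proof (rule exI[of _ "norm a0 + 2 * M"], rule exI[of _ "M + norm a0 + C"], intro allI impI conjI)
    fix \<alpha> \<beta> :: real and x :: 'a
    assume ab: "\<alpha> \<in> {0..1}" "\<beta> \<in> {0..1}" and x: "norm x \<le> r"
    define u where "u = relaxed_comp A n \<beta> x"
    define v where "v = relaxed_comp A n \<alpha> x"
    have u: "norm u \<le> M" and uv: "norm (u - v) \<le> C * \<bar>\<beta> - \<alpha>\<bar>"
      using MC[rule_format, OF ab x] unfolding u_def v_def by auto
    have "norm (relaxed_proj (A (Suc n)) \<beta> u) \<le> norm a0 + 2 * norm u" using F(3) ab by auto
    then show "norm (relaxed_comp A (Suc n) \<beta> x) \<le> norm a0 + 2 * M"
      using u unfolding u_def by simp
    have "relaxed_comp A (Suc n) \<beta> x - relaxed_comp A (Suc n) \<alpha> x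
        = (relaxed_proj (A (Suc n)) \<beta> u - relaxed_proj (A (Suc n)) \<alpha> u)
          + (relaxed_proj (A (Suc n)) \<alpha> u - relaxed_proj (A (Suc n)) \<alpha> v)"
      unfolding u_def v_def by simp
    also have "\<dots> = (\<beta> - \<alpha>) *\<^sub>R (metric_proj (A (Suc n)) u - u)
          + (relaxed_proj (A (Suc n)) \<alpha> u - relaxed_proj (A (Suc n)) \<alpha> v)"
      by (simp only: F(2))
    finally have "norm (relaxed_comp A (Suc n) \<beta> x - relaxed_comp A (Suc n) \<alpha> x)
        \<le> norm ((\<beta> - \<alpha>) *\<^sub>R (metric_proj (A (Suc n)) u - u))
          + norm (relaxed_proj (A (Suc n)) \<alpha> u - relaxed_proj (A (Suc n)) \<alpha> v)"
      by (simp only: norm_triangle_ineq)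
    also have "\<dots> \<le> \<bar>\<beta> - \<alpha>\<bar> * (M + norm a0) + C * \<bar>\<beta> - \<alpha>\<bar>"
    proof (rule add_mono)
      show "norm ((\<beta> - \<alpha>) *\<^sub>R (metric_proj (A (Suc n)) u - u)) \<le> \<bar>\<beta> - \<alpha>\<bar> * (M + norm a0)"
        using F(1)[of u] u by (simp add: mult_left_mono)
      show "norm (relaxed_proj (A (Suc n)) \<alpha> u - relaxed_proj (A (Suc n)) \<alpha> v) \<le> C * \<bar>\<beta> - \<alpha>\<bar>"
        using rp_lip[OF As, of \<alpha> u v] ab uv by auto
    qed
    finally show "norm (relaxed_comp A (Suc n) \<beta> x - relaxed_comp A (Suc n) \<alpha> x)
        \<le> (M + norm a0 + C) * \<bar>\<beta> - \<alpha>\<bar>" by (simp add: algebra_simps)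
  qed
qed

theorem proposition3:
  fixes A :: "nat \<Rightarrow> 'a::{real_inner,complete_space} set"
    and k :: nat and r :: real
  assumes "k \<ge> 1"
    and "\<And>i. i \<in> {1..k} \<Longrightarrow> A i \<noteq> {}"
    and "\<And>i. i \<in> {1..k} \<Longrightarrow> convex (A i)"
    and "\<And>i. i \<in> {1..k} \<Longrightarrow> closed (A i)"
    and "r > 0"
  shows "closedin (top_of_set {0..1})
           {\<alpha> \<in> {0..1}. \<exists>x. relaxed_comp A k \<alpha> x = x \<and> norm x \<le> r}"
proof (rule closed_subset)
  have As: "\<And>i. i \<in> {1..k} \<Longrightarrow> closed (A i) \<and> convex (A i) \<and> A i \<noteq> {}" using assms by auto
  obtain M C where MC0: "\<forall>\<alpha> \<beta> x. \<alpha> \<in> {0..1} \<longrightarrow> \<beta> \<in> {0..1} \<longrightarrow> norm x \<le> r \<longrightarrow>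
     norm (relaxed_comp A k \<beta> x) \<le> M \<and>
     norm (relaxed_comp A k \<beta> x - relaxed_comp A k \<alpha> x) \<le> C * \<bar>\<beta> - \<alpha>\<bar>"
    using rc_bound[where n=k and A=A and r=r, OF As] by blast
  have MC: "\<And>\<alpha> \<beta> x. \<alpha> \<in> {0..1} \<Longrightarrow> \<beta> \<in> {0..1} \<Longrightarrow> norm x \<le> r \<Longrightarrow>
     norm (relaxed_comp A k \<beta> x - relaxed_comp A k \<alpha> x) \<le> C * \<bar>\<beta> - \<alpha>\<bar>"
    using MC0 by blast
  show "closed {\<alpha> \<in> {0..1}. \<exists>x. relaxed_comp A k \<alpha> x = x \<and> norm x \<le> r}"
    unfolding closed_sequential_limits
  proof (intro allI impI, elim conjE)
    fix as :: "nat \<Rightarrow> real" and a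
    assume mem: "\<forall>n. as n \<in> {\<alpha> \<in> {0..1}. \<exists>x. relaxed_comp A k \<alpha> x = x \<and> norm x \<le> r}"
      and lim: "as \<longlonglongrightarrow> a"
    have as01: "\<And>n. as n \<in> {0..1}" using mem by auto
    have a01: "a \<in> {0..1}"
      using closed_sequentially[OF closed_atLeastAtMost as01 lim] by auto
    have "\<forall>n. \<exists>x. relaxed_comp A k (as n) x = x \<and> norm x \<le> r" using mem by auto
    then obtain x where xf: "\<And>n. relaxed_comp A k (as n) (x n) = x n" and xr: "\<And>n. norm (x n) \<le> r"
      by metis
    have e: "(\<lambda>n. norm (relaxed_comp A k a (x n) - x n)) \<longlonglongrightarrow> 0"
    proof (rule tendsto_sandwich[of "\<lambda>n. 0" _ _ "\<lambda>n. C * \<bar>a - as n\<bar>"])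
      show "\<forall>\<^sub>F n in sequentially. 0 \<le> norm (relaxed_comp A k a (x n) - x n)" by simp
      show "\<forall>\<^sub>F n in sequentially. norm (relaxed_comp A k a (x n) - x n) \<le> C * \<bar>a - as n\<bar>"
      proof (rule always_eventually, rule allI)
        fix n
        show "norm (relaxed_comp A k a (x n) - x n) \<le> C * \<bar>a - as n\<bar>"
          using MC[OF as01[of n] a01 xr[of n]] xf[of n] by simp
      qed
      have "(\<lambda>n. C * \<bar>a - as n\<bar>) \<longlonglongrightarrow> C * \<bar>a - a\<bar>" by (intro tendsto_intros lim)
      then show "(\<lambda>n. C * \<bar>a - as n\<bar>) \<longlonglongrightarrow> 0" by simp
    qed simp
    have ne: "\<And>u v. norm (relaxed_comp A k a u - relaxed_comp A k a v) \<le> norm (u - v)"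
      using rc_lip[OF As] a01 by auto
    obtain c where "relaxed_comp A k a c = c" "norm c \<le> r"
      using AC[OF ne xr _ e] assms(5) by auto
    then show "a \<in> {\<alpha> \<in> {0..1}. \<exists>x. relaxed_comp A k \<alpha> x = x \<and> norm x \<le> r}"
      using a01 by auto
  qed
qed auto

end
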